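(* Let $n\ge1$ and $U>0$. Consider the latent affine nonlinear dynamic system $$\boldsymbol{z}^{t+1}=\boldsymbol{A}(\boldsymbol{z}^t)\boldsymbol{z}^t+\boldsymbol{B}(\boldsymbol{z}^t)u^t,\qquad \boldsymbol{x}^t=g(\boldsymbol{z}^t),$$ where $\boldsymbol{z}^t\in\mathbb{R}^n$, $u^t\in(-U,U)$, $\boldsymbol{A}(\boldsymbol{z})\in\mathbb{R}^{n\times n}$ has first $n-1$ rows $\boldsymbol{e}_2^T,\dots,\boldsymbol{e}_n^T$ and last row $(a_1(\boldsymbol{z}),\dots,a_n(\boldsymbol{z}))$, $\boldsymbol{B}(\boldsymbol{z})=(0,\dots,0,b(\boldsymbol{z}))^T$, and $g:\mathbb{R}^n\to\mathcal{X}\subset\mathbb{R}^m$ ($m\ge n$) is an unknown injective differentiable function. Assume the coefficient functions $a_1,\dots,a_n,b:\mathbb{R}^n\to\mathbb{R}$ are differentiable and bounded, $|a_1(\cdot)|\ge h_a>0$ and $|b(\cdot)|\ge h_b>0$ for some constants $h_a,h_b$, and that the equation $\boldsymbol{c}=\boldsymbol{A}(\boldsymbol{c})\boldsymbol{c}$ has the unique solution $\boldsymbol{c}=\boldsymbol{0}$. Let $f:\mathcal{X}\to\mathbb{R}^n$ be a differentiable encoder and let $\boldsymbol{\hat A}(\cdot),\boldsymbol{\hat B}(\cdot)$ have the same structure as $\boldsymbol{A}(\cdot),\boldsymbol{B}(\cdot)$ with differentiable coefficient functions $\hat a_1,\dots,\hat a_n,\hat b$, and suppose $(f,\boldsymbol{\hat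 A},\boldsymbol{\hat B})$ solves $$\min_{\boldsymbol{\hat A}(\cdot),\boldsymbol{\hat B}(\cdot),f}\ \mathbb{E}\big[\|f(\boldsymbol{x}^{t+1})-\boldsymbol{\hat A}(f(\boldsymbol{x}^t))f(\boldsymbol{x}^t)-\boldsymbol{\hat B}(f(\boldsymbol{x}^t))u^t\|^2\big]\quad\text{s.t. } |\hat b(\cdot)|\ge \hat h_b>0,$$ for an arbitrary positive constant $\hat h_b$, where the expectation is taken over all states $\boldsymbol{z}^t\in\mathbb{R}^n$ and all admissible inputs $u^t$ (with unknown distributions), $\boldsymbol{x}^t=g(\boldsymbol{z}^t)$ and $\boldsymbol{x}^{t+1}=g(\boldsymbol{z}^{t+1})$. Let $\tau=f\circ g$. Then there is a nonzero constant $\Delta b\in\mathbb{R}$ such that for all $\boldsymbol{z}\in\mathbb{R}^n$, writing $\boldsymbol{\hat z}=\tau(\boldsymbol{z})$: $\boldsymbol{\hat z}=\tau(\boldsymbol{z})=\Delta b\cdot\boldsymbol{z}$, $\boldsymbol{\hat A}(\boldsymbol{\hat z})\boldsymbol{\hat z}=\Delta b\,\boldsymbol{A}(\boldsymbol{z})\boldsymbol{z}$, and $\hat b(\boldsymbol{\hat z})=\Delta b\cdot b(\boldsymbol{z})$.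
   Context: This is the system $q^{t+n}-a_n(\boldsymbol{z}^t)q^{t+n-1}-\cdots-a_1(\boldsymbol{z}^t)q^t=b(\boldsymbol{z}^t)u^t$ with $\boldsymbol{z}^t=(q^t,\dots,q^{t+n-1})^T$, in controllable canonical form; the order $n$ is known. The input can be set to any admissible value at any state. *)

theory Defs
  imports "HOL-Analysis.Analysis"
begin

text \<open>State space R^n is rendered as real^'n for a finite linearly ordered index
type 'n (n = CARD('n) >= 1 automatically).  Coordinates are ordered by the linear
order of 'n; pos i in {0..n-1} is the position of index i.\<close>

definition pos :: "'n::{finite,linorder} \<Rightarrow> nat" where
  "pos i = card {j. j < i}"

text \<open>First index (coordinate 1) and the controllable canonical (companion) matrix
whose first n-1 rows are e_2^T,...,e_n^T and whose last row is (a_1,...,a_n),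
where a j is the coefficient in column j.\<close>

definition first_idx :: "'n::{finite,linorder}" where
  "first_idx = Min UNIV"

definition companion :: "('n::{finite,linorder} \<Rightarrow> real) \<Rightarrow> real^'n::{finite,linorder}^'n::{finite,linorder}" where
  "companion a = (\<chi> i j. if pos i + 1 < CARD('n)
                           then (if pos j = pos i + 1 then 1 else 0)
                           else a j)"

definition lastvec :: "real \<Rightarrow> real^'n::{finite,linorder}" where
  "lastvec b = (\<chi> i. if pos i + 1 = CARD('n) then b else 0)"

end

theory Submission
  imports Defs
begin

lemma loc_const:
  fixes \<phi> :: "real \<Rightarrow> real"
  assumes r: "r > 0" and h: "\<And>x v. \<bar>v\<bar> < r \<Longrightarrow> \<phi> (x + v) = \<phi> x"
  shows "\<phi> x = \<phi> y"
proof -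
  have "\<forall>x. DERIV \<phi> x :> 0"
  proof
    fix x
    have d: "DERIV (\<lambda>_. \<phi> x) x :> 0" by simp
    show "DERIV \<phi> x :> 0"
    proof (rule has_field_derivative_transform_within_open[OF d, of "ball x r"])
      fix y assume "y \<in> ball x r"
      then have "\<bar>y - x\<bar> < r" by (simp add: dist_real_def abs_minus_commute)
      from h[OF this, of x] show "\<phi> x = \<phi> y" by simp
    qed (use r in simp_all)
  qed
  then show ?thesis by (rule DERIV_isconst_all)
qed

lemma loc_affine:
  fixes \<phi> :: "real \<Rightarrow> real"
  assumes r: "r > 0" and h: "\<And>x. \<exists>\<beta>. \<forall>v. \<bar>v\<bar> < r \<longrightarrow> \<phi> (x + v) = \<phi> x + \<beta> * v"
  shows "\<exists>k d. \<forall>x. \<phi> x = k * x + d"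
proof -
  have "\<forall>x. \<exists>\<beta>. \<forall>v. \<bar>v\<bar> < r \<longrightarrow> \<phi> (x + v) = \<phi> x + \<beta> * v" using h by blast
  then obtain B where B0: "\<forall>x. \<forall>v. \<bar>v\<bar> < r \<longrightarrow> \<phi> (x + v) = \<phi> x + B x * v"
    by (rule choice[THEN exE]) blast
  have B: "\<phi> (x + v) = \<phi> x + B x * v" if "\<bar>v\<bar> < r" for x v using B0 that by blast
  have Bl: "B (x + w) = B x" if w: "\<bar>w\<bar> < r/2" for x w
  proof -
    define v where "v = r/4"
    have v: "\<bar>v\<bar> < r" "\<bar>w + v\<bar> < r" "v \<noteq> 0" using w r by (auto simp: v_def)
    have "\<phi> (x + w + v) = \<phi> (x + w) + B (x + w) * v" using B[OF v(1)] .
    moreover have "\<phi> (x + (w + v)) = \<phi> x + B x * (w + v)" using B[OF v(2)] .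
    moreover have "\<phi> (x + w) = \<phi> x + B x * w" using B w r by simp
    ultimately have "B (x + w) * v = B x * v" by (simp add: algebra_simps)
    with v(3) show ?thesis by simp
  qed
  have Bc: "B x = B 0" for x
    by (rule loc_const[of "r/2"]) (use r Bl in auto)
  define d where "d = \<phi> 0"
  have e: "\<phi> x - B 0 * x = \<phi> 0 - B 0 * 0" for x
  proof (rule loc_const[OF r, of "\<lambda>x. \<phi> x - B 0 * x"])
    fix x v :: real assume "\<bar>v\<bar> < r"
    then show "\<phi> (x + v) - B 0 * (x + v) = \<phi> x - B 0 * x"
      using B[of v x] Bc[of x] by (simp add: algebra_simps)
  qed
  have "\<phi> x = B 0 * x + \<phi> 0" for x using e[of x] by simp
  then show ?thesis by blast
qed

definition idx :: "nat \<Rightarrow> 'n::{finite,linorder}" where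
  "idx k = (THE i. pos i = k)"

lemma pos_mono: "(i::'n::{finite,linorder}) < j \<Longrightarrow> pos i < pos j"
  unfolding pos_def by (rule psubset_card_mono) auto

lemma pos_inj: "pos (i::'n::{finite,linorder}) = pos j \<longleftrightarrow> i = j"
  by (metis linorder_neq_iff pos_mono less_irrefl)

lemma pos_lt: "pos (i::'n::{finite,linorder}) < CARD('n)"
  unfolding pos_def by (rule psubset_card_mono) auto

lemma pos_bij: "bij_betw (pos :: 'n::{finite,linorder} \<Rightarrow> nat) UNIV {..<CARD('n)}"
proof -
  have "inj (pos :: 'n \<Rightarrow> nat)" by (simp add: inj_def pos_inj)
  moreover have "pos ` (UNIV::'n set) \<subseteq> {..<CARD('n)}" using pos_lt by auto
  moreover have "card (pos ` (UNIV::'n set)) = CARD('n)" using calculation(1) card_image by blast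
  ultimately have "pos ` (UNIV::'n set) = {..<CARD('n)}"
    by (metis card_lessThan card_subset_eq finite_lessThan)
  with \<open>inj pos\<close> show ?thesis by (simp add: bij_betw_def)
qed

lemma pos_surj: "k < CARD('n::{finite,linorder}) \<Longrightarrow> \<exists>i::'n. pos i = k"
  using pos_bij unfolding bij_betw_def by (metis imageE lessThan_iff)

lemma pos_idx: "k < CARD('n::{finite,linorder}) \<Longrightarrow> pos (idx k :: 'n) = k"
  unfolding idx_def by (metis (mono_tags, lifting) pos_inj pos_surj theI)

lemma idx_pos: "idx (pos (i::'n::{finite,linorder})) = i"
  using pos_idx[OF pos_lt[of i]] pos_inj by metis

lemma pos_first: "pos (first_idx :: 'n::{finite,linorder}) = 0"
  unfolding pos_def first_idx_def by (auto simp: not_less[symmetric])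


definition sh :: "real^'n::{finite,linorder} \<Rightarrow> real \<Rightarrow> real^'n::{finite,linorder}" where
  "sh z s = (\<chi> i. if pos i + 1 < CARD('n) then z $ idx (pos i + 1) else s)"

lemma sh_nth: "sh z s $ (i::'n::{finite,linorder}) = (if pos i + 1 < CARD('n::{finite,linorder}) then z $ idx (pos i + 1) else s)"
  by (simp add: sh_def)

lemma sh_last: "sh z s $ (idx (CARD('n::{finite,linorder}) - 1) :: 'n::{finite,linorder}) = s"
proof -
  have "0 < CARD('n)" by simp
  then show ?thesis by (simp add: sh_nth pos_idx)
qed

lemma mult_if_one: "(if P then 1 else 0) * (x::real) = (if P then x else 0)"
  by simp

lemma comp_sh:
  "companion (a::'n::{finite,linorder} \<Rightarrow> real) *v z + u *\<^sub>R lastvec bb = sh z ((\<Sum>j\<in>UNIV. a j * z $ j) + u * bb)"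
proof -
  have "(companion a *v z + u *\<^sub>R lastvec bb) $ i = sh z ((\<Sum>j\<in>UNIV. a j * z $ j) + u * bb) $ i" for i :: 'n
  proof (cases "pos i + 1 < CARD('n)")
    case True
    have e: "(pos j = Suc (pos i)) = (j = idx (Suc (pos i)))" for j :: 'n
      using pos_idx[OF True] pos_inj[of j "idx (Suc (pos i))"] by auto
    have "(companion a *v z) $ i = (\<Sum>j\<in>UNIV. (if j = idx (pos i + 1) then 1 else 0) * z $ j)"
      using True by (simp add: companion_def matrix_vector_mult_def e)
    also have "\<dots> = z $ idx (pos i + 1)"
      by (simp only: mult_if_one) simp
    finally show ?thesis using True by (simp add: sh_nth lastvec_def)
  next
    case False
    then have "pos i + 1 = CARD('n)" using pos_lt[of i] by simp
    then show ?thesis using False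
      by (simp add: sh_nth lastvec_def companion_def matrix_vector_mult_def)
  qed
  then show ?thesis by (simp add: vec_eq_iff)
qed

lemma sh_eq: "(\<And>j. pos j \<noteq> 0 \<Longrightarrow> z $ j = w $ j) \<Longrightarrow> sh z s = sh w s"
  unfolding vec_eq_iff sh_nth by (metis add_is_0 one_neq_zero pos_idx)

lemma surj_c:
  fixes a :: "'n::{finite,linorder} \<Rightarrow> real^'n::{finite,linorder} \<Rightarrow> real"
  assumes cont: "\<And>j. continuous_on UNIV (a j)" and bdd: "\<And>j. bounded (range (a j))"
    and ha: "h_a > 0" and low: "\<And>z. \<bar>a first_idx z\<bar> \<ge> h_a"
  shows "\<exists>z. (\<Sum>j\<in>UNIV. a j z * z $ j) = s \<and> (\<forall>j. j \<noteq> first_idx \<longrightarrow> z $ j = w $ j)"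
proof -
  define zt where "zt t = (\<chi> j. if j = first_idx then t else w $ j)" for t
  define A1 where "A1 t = a first_idx (zt t)" for t
  define R where "R t = (\<Sum>j\<in>UNIV - {first_idx}. a j (zt t) * w $ j)" for t
  define cz where "cz t = (\<Sum>j\<in>UNIV. a j (zt t) * zt t $ j)" for t
  have czR: "cz t = A1 t * t + R t" for t
  proof -
    have "cz t = a first_idx (zt t) * zt t $ first_idx + (\<Sum>j\<in>UNIV - {first_idx}. a j (zt t) * zt t $ j)"
      unfolding cz_def by (rule sum.remove) auto
    also have "(\<Sum>j\<in>UNIV - {first_idx}. a j (zt t) * zt t $ j) = R t"
      unfolding R_def by (rule sum.cong) (auto simp: zt_def)
    finally show ?thesis by (simp add: A1_def zt_def)
  qed
  have ztc: "continuous_on UNIV zt"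
    unfolding zt_def
    apply (intro continuous_on_vec_lambda)
    subgoal for j by (cases "j = first_idx") (auto intro: continuous_intros)
    done
  have ac: "continuous_on UNIV (\<lambda>t. a j (zt t))" for j
    by (rule continuous_on_compose2[OF cont ztc]) auto
  have A1c: "continuous_on S A1" for S
    unfolding A1_def using ac continuous_on_subset by blast
  have czc: "continuous_on S cz" for S
    unfolding cz_def by (intro continuous_intros continuous_on_subset[OF ac] continuous_on_subset[OF ztc]) auto
  obtain Bf where Bf: "\<And>j x. \<bar>a j x\<bar> \<le> Bf j"
    using bdd unfolding bounded_iff by (metis real_norm_def rangeI)
  define M where "M = (\<Sum>j\<in>UNIV - {first_idx}. Bf j * \<bar>w $ j\<bar>)"
  have RM: "\<bar>R t\<bar> \<le> M" for t
  proof -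
    have "\<bar>R t\<bar> \<le> (\<Sum>j\<in>UNIV - {first_idx}. \<bar>a j (zt t) * w $ j\<bar>)"
      unfolding R_def by (rule sum_abs)
    also have "\<dots> \<le> M" unfolding M_def
      by (rule sum_mono) (auto simp: abs_mult intro: mult_right_mono Bf)
    finally show ?thesis .
  qed
  have M0: "M \<ge> 0" using RM[of 0] by simp
  define T0 where "T0 = (\<bar>s\<bar> + M) / h_a + 1"
  have T0: "T0 > 0" "h_a * T0 = \<bar>s\<bar> + M + h_a" using ha M0
    by (auto simp: T0_def field_simps intro!: add_pos_nonneg)
  have nz: "A1 t \<noteq> 0" for t using low[of "zt t"] ha by (auto simp: A1_def)
  have Rb: "- M \<le> R t" "R t \<le> M" for t using RM[of t] by (auto simp: abs_le_iff)
  have sb: "- \<bar>s\<bar> \<le> s" "s \<le> \<bar>s\<bar>" by auto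
  have pos_case: "A1 t \<ge> h_a" if "A1 t > 0" for t using low[of "zt t"] that by (auto simp: A1_def)
  have neg_case: "A1 t \<le> - h_a" if "A1 t < 0" for t using low[of "zt t"] that by (auto simp: A1_def)
  have "\<exists>t. cz t = s"
  proof (cases "A1 T0 > 0")
    case p1: True
    show ?thesis
    proof (cases "A1 (-T0) > 0")
      case p2: True
      have "A1 T0 * T0 \<ge> h_a * T0" using pos_case[OF p1] T0 by (intro mult_right_mono) auto
      then have "cz T0 \<ge> s" using czR[of T0] Rb[of T0] sb T0 ha by linarith
      moreover have "A1 (-T0) * T0 \<ge> h_a * T0" using pos_case[OF p2] T0 by (intro mult_right_mono) auto
      then have "cz (-T0) \<le> s" using czR[of "-T0"] Rb[of "-T0"] sb T0 ha by linarith
      ultimately show ?thesis using IVT'[of cz "-T0" s T0] czc T0 by auto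
    next
      case False
      then have "A1 (-T0) < 0" using nz[of "-T0"] by linarith
      then show ?thesis using IVT'[of A1 "-T0" 0 T0] A1c p1 T0 nz by force
    qed
  next
    case False
    then have n1: "A1 T0 < 0" using nz[of T0] by linarith
    show ?thesis
    proof (cases "A1 (-T0) > 0")
      case True
      then show ?thesis using IVT2'[of A1 T0 0 "-T0"] A1c n1 T0 nz by force
    next
      case False
      then have n2: "A1 (-T0) < 0" using nz[of "-T0"] by linarith
      have "A1 T0 * T0 \<le> - h_a * T0" using neg_case[OF n1] T0 by (intro mult_right_mono) auto
      then have "cz T0 \<le> s" using czR[of T0] Rb[of T0] sb T0 ha by linarith
      moreover have "A1 (-T0) * T0 \<le> -h_a * T0" using neg_case[OF n2] T0 by (intro mult_right_mono) auto
      then have "cz (-T0) \<ge> s" using czR[of "-T0"] Rb[of "-T0"] sb T0 ha by linarith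
      ultimately show ?thesis using IVT2'[of cz T0 s "-T0"] czc T0 by auto
    qed
  qed
  then obtain t where "cz t = s" by blast
  then show ?thesis by (intro exI[of _ "zt t"]) (auto simp: cz_def zt_def)
qed

theorem theorem2:
  fixes U h_a h_b hh_b :: real
    and a :: "'n::{finite,linorder} \<Rightarrow> real^'n::{finite,linorder} \<Rightarrow> real"
    and b :: "real^'n::{finite,linorder} \<Rightarrow> real"
    and g :: "real^'n::{finite,linorder} \<Rightarrow> real^'m::finite"
    and f :: "real^'m \<Rightarrow> real^'n::{finite,linorder}"
    and ah :: "'n \<Rightarrow> real^'n::{finite,linorder} \<Rightarrow> real"
    and bh :: "real^'n::{finite,linorder} \<Rightarrow> real"
  assumes U_pos: "U > 0"
    and dim: "CARD('m) \<ge> CARD('n)"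
    and g_inj: "inj g"
    and g_diff: "\<And>z. g differentiable (at z)"
    and a_diff: "\<And>j z. a j differentiable (at z)"
    and b_diff: "\<And>z. b differentiable (at z)"
    and a_bdd: "\<And>j. bounded (range (a j))"
    and b_bdd: "bounded (range b)"
    and h_a_pos: "h_a > 0" and a1_low: "\<And>z. \<bar>a first_idx z\<bar> \<ge> h_a"
    and h_b_pos: "h_b > 0" and b_low: "\<And>z. \<bar>b z\<bar> \<ge> h_b"
    and fix_unique: "\<And>c. c = companion (\<lambda>j. a j c) *v c \<longleftrightarrow> c = 0"
    and f_diff: "f differentiable_on range g"
    and ah_diff: "\<And>j z. ah j differentiable (at z)"
    and bh_diff: "\<And>z. bh differentiable (at z)"
    and hh_b_pos: "hh_b > 0" and bh_low: "\<And>z. \<bar>bh z\<bar> \<ge> hh_b"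
    and optimal: "\<And>z u. \<bar>u\<bar> < U \<Longrightarrow>
        f (g (companion (\<lambda>j. a j z) *v z + u *\<^sub>R lastvec (b z))) =
        companion (\<lambda>j. ah j (f (g z))) *v f (g z) + u *\<^sub>R lastvec (bh (f (g z)))"
  shows "\<exists>\<Delta>b::real. \<Delta>b \<noteq> 0 \<and>
     (\<forall>z. (f \<circ> g) z = \<Delta>b *\<^sub>R z \<and>
          companion (\<lambda>j. ah j ((f \<circ> g) z)) *v (f \<circ> g) z
            = \<Delta>b *\<^sub>R (companion (\<lambda>j. a j z) *v z) \<and>
          bh ((f \<circ> g) z) = \<Delta>b * b z)"
proof -
  let ?N = "CARD('n)"
  define lst :: 'n where "lst = idx (?N - 1)"
  have N0: "0 < ?N" by simp
  have pos_lst: "pos lst = ?N - 1" unfolding lst_def using N0 by (simp add: pos_idx)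
  have is_lst: "(\<not> pos i + 1 < ?N) = (i = lst)" for i :: 'n
    using pos_lt[of i] pos_lst pos_inj[of i lst] by auto
  define T where "T = f \<circ> g"
  define c where "c z = (\<Sum>j\<in>UNIV. a j z * z $ j)" for z
  define ch where "ch z = (\<Sum>j\<in>UNIV. ah j (T z) * T z $ j)" for z
  have E: "T (sh z (c z + u * b z)) = sh (T z) (ch z + u * bh (T z))" if "\<bar>u\<bar> < U" for z u
    using optimal[OF that, of z] unfolding comp_sh T_def c_def ch_def by simp
  have E0: "T (sh z (c z)) = sh (T z) (ch z)" for z using E[of 0 z] U_pos by simp
  define r where "r = U * h_b"
  have r: "r > 0" using U_pos h_b_pos by (simp add: r_def)
  have bnz: "b z \<noteq> 0" for z using b_low[of z] h_b_pos by auto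
  have locv: "T (sh z (c z + v)) = sh (T z) (ch z + v * (bh (T z) / b z))" if v: "\<bar>v\<bar> < r" for z v
  proof -
    have "\<bar>v\<bar> < U * \<bar>b z\<bar>" using v b_low[of z] U_pos unfolding r_def
      by (smt (verit) mult_left_mono)
    then have "\<bar>v / b z\<bar> < U" using bnz[of z] by (simp add: abs_divide divide_less_eq)
    from E[OF this, of z] show ?thesis using bnz[of z] by simp
  qed
  have acont: "continuous_on UNIV (a j)" for j
    using a_diff by (simp add: continuous_at_imp_continuous_on differentiable_imp_continuous_within)
  have surj: "\<exists>z. c z = s \<and> sh z s' = sh w s'" for w s s'
  proof -
    obtain z where z: "c z = s" "\<forall>j. j \<noteq> first_idx \<longrightarrow> z $ j = w $ j"
      using surj_c[of a h_a s w, OF acont a_bdd h_a_pos a1_low] unfolding c_def by blast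
    have "sh z s' = sh w s'"
      by (rule sh_eq) (metis z(2) pos_first)
    with z show ?thesis by blast
  qed
  have step5: "T (sh w s) $ i = T w $ idx (pos i + 1)" if i: "pos i + 1 < ?N" for w s i
  proof -
    define \<phi> where "\<phi> s = T (sh w s) $ i" for s
    have "\<phi> s = \<phi> (c w)"
    proof (rule loc_const[of r \<phi>, OF r])
      fix x v :: real assume v: "\<bar>v\<bar> < r"
      obtain z where z: "c z = x" "sh z x = sh w x" using surj by blast
      have zz: "sh z y = sh w y" for y using z(2) unfolding vec_eq_iff sh_nth by metis
      have "\<phi> (x + v) = T (sh z (c z + v)) $ i" using zz z(1) by (simp add: \<phi>_def)
      also have "\<dots> = T z $ idx (pos i + 1)" using locv[OF v, of z] i by (simp add: sh_nth)
      also have "\<dots> = T (sh z (c z)) $ i" using E0[of z] i by (simp add: sh_nth)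
      also have "\<dots> = \<phi> x" using zz z(1) by (simp add: \<phi>_def)
      finally show "\<phi> (x + v) = \<phi> x" .
    qed
    also have "\<phi> (c w) = T w $ idx (pos i + 1)" using E0[of w] i by (simp add: \<phi>_def sh_nth)
    finally show ?thesis by (simp add: \<phi>_def)
  qed
  have H: "k < ?N \<Longrightarrow> (\<forall>j. k \<le> pos j \<longrightarrow> z $ j = w $ j) \<Longrightarrow> T z $ idx k = T w $ idx k" for k z w
  proof (induction k arbitrary: z w)
    case 0
    then have "z = w" by (simp add: vec_eq_iff)
    then show ?case by simp
  next
    case (Suc k)
    have kN: "pos (idx k :: 'n) + 1 < ?N" using Suc.prems(1) by (simp add: pos_idx)
    have ik: "idx (pos (idx k :: 'n) + 1) = (idx (Suc k) :: 'n)" using Suc.prems(1) by (simp add: pos_idx)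
    have "T z $ idx (Suc k) = T (sh z 0) $ idx k" using step5[OF kN, of z 0] ik by simp
    also have "\<dots> = T (sh w 0) $ idx k"
    proof (rule Suc.IH)
      show "k < ?N" using Suc.prems(1) by simp
      show "\<forall>j. k \<le> pos j \<longrightarrow> sh z 0 $ j = sh w 0 $ j"
        using Suc.prems(2) by (auto simp: sh_nth pos_idx)
    qed
    also have "\<dots> = T w $ idx (Suc k)" using step5[OF kN, of w 0] ik by simp
    finally show ?case .
  qed
  define \<psi> where "\<psi> x = T (\<chi> j. x) $ lst" for x
  have C: "m < ?N \<Longrightarrow> T z $ idx (?N - 1 - m) = \<psi> (z $ idx (?N - 1 - m))" for m z
  proof (induction m arbitrary: z)
    case 0
    have "T z $ idx (?N - 1) = T (\<chi> j. z $ lst) $ idx (?N - 1)"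
    proof (rule H)
      show "?N - 1 < ?N" using N0 by simp
      have jl: "j = lst" if "?N - 1 \<le> pos j" for j :: 'n
        using that by (subst is_lst[symmetric]) linarith
      show "\<forall>j. ?N - 1 \<le> pos j \<longrightarrow> z $ j = (\<chi> j. z $ lst) $ j"
        using jl by auto
    qed
    then show ?case by (simp add: \<psi>_def lst_def)
  next
    case (Suc m)
    define k where "k = ?N - 1 - Suc m"
    have k1: "?N - 1 - m = k + 1" using Suc.prems unfolding k_def by simp
    have kN: "pos (idx k :: 'n) + 1 < ?N" using Suc.prems unfolding k_def by (simp add: pos_idx)
    define Rz where "Rz = (\<chi> j::'n. if pos j = 0 then 0 else z $ idx (pos j - 1))"
    have zR: "z = sh Rz (z $ lst)"
      unfolding vec_eq_iff
    proof
      fix i :: 'n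
      show "z $ i = sh Rz (z $ lst) $ i"
      proof (cases "pos i + 1 < ?N")
        case True
        then show ?thesis by (simp add: sh_nth Rz_def pos_idx idx_pos)
      next
        case False
        then have "i = lst" using is_lst by blast
        then show ?thesis using False by (simp add: sh_nth)
      qed
    qed
    have "T z $ idx k = T (sh Rz (z $ lst)) $ idx k" using zR by simp
    also have "\<dots> = T Rz $ idx (k + 1)" using step5[OF kN] Suc.prems by (simp add: pos_idx k_def)
    also have "\<dots> = \<psi> (Rz $ idx (k + 1))" using Suc.IH[of Rz] Suc.prems k1 by simp
    also have "\<dots> = \<psi> (z $ idx k)" using Suc.prems by (simp add: Rz_def pos_idx k_def)
    finally show ?case by (simp add: k_def)
  qed
  have Tpsi: "T z $ i = \<psi> (z $ i)" for z i
  proof -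
    have "?N - 1 - (?N - 1 - pos i) = pos i" using pos_lt[of i] by simp
    with C[of "?N - 1 - pos i" z] show ?thesis using pos_lt[of i] by (simp add: idx_pos)
  qed
  have psiloc: "\<psi> (c z + v) = ch z + v * (bh (T z) / b z)" if "\<bar>v\<bar> < r" for z v
  proof -
    have "\<psi> (c z + v) = T (sh z (c z + v)) $ lst" using Tpsi sh_last lst_def by metis
    also have "\<dots> = ch z + v * (bh (T z) / b z)" using locv[OF that] sh_last lst_def by metis
    finally show ?thesis .
  qed
  have "\<exists>k d. \<forall>x. \<psi> x = k * x + d"
  proof (rule loc_affine[OF r])
    fix x
    obtain z where z: "c z = x" using surj by blast
    show "\<exists>\<beta>. \<forall>v. \<bar>v\<bar> < r \<longrightarrow> \<psi> (x + v) = \<psi> x + \<beta> * v"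
      using psiloc[of 0 z] psiloc[of _ z] r z by (intro exI[of _ "bh (T z) / b z"]) auto
  qed
  then obtain k d where kd: "\<And>x. \<psi> x = k * x + d" by blast
  have bhk: "bh (T z) = k * b z" for z
  proof -
    define \<beta> where "\<beta> = bh (T z) / b z"
    have e1: "\<psi> (c z) = ch z" using psiloc[of 0 z] r by simp
    have e2: "\<psi> (c z + r/2) = ch z + (r/2) * \<beta>" using psiloc[of "r/2" z] r
      by (simp add: \<beta>_def mult.commute)
    have "k * (c z + r/2) + d = (k * c z + d) + (r/2) * \<beta>" using e1 e2 kd by metis
    then have "k * (r/2) = (r/2) * \<beta>" by (simp add: algebra_simps)
    then have "k = \<beta>" using r by simp
    then show ?thesis using bnz[of z] by (simp add: \<beta>_def field_simps)
  qed
  have k0: "k \<noteq> 0" using bhk[of 0] bh_low[of "T 0"] hh_b_pos by auto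
  have Tlin: "T z = k *\<^sub>R z + (\<chi> j. d)" for z
    using Tpsi kd by (simp add: vec_eq_iff)
  have d0: "d = 0"
  proof -
    define z0 :: "real^'n::{finite,linorder}" where "z0 = (\<chi> j. - d / k)"
    have Tz0: "T z0 = 0" using k0 by (simp add: Tlin z0_def vec_eq_iff)
    have "sh z0 (c z0) = companion (\<lambda>j. a j z0) *v z0"
      using comp_sh[of "\<lambda>j. a j z0" z0 0 "b z0"] by (simp add: c_def)
    moreover have "T (sh z0 (c z0)) = 0" using E0[of z0] Tz0
      by (simp add: ch_def vec_eq_iff sh_nth)
    ultimately have "k *\<^sub>R (companion (\<lambda>j. a j z0) *v z0) + (\<chi> j. d) = 0" using Tlin by metis
    moreover define A0 where "A0 = companion (\<lambda>j. a j z0) *v z0"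
    ultimately have h: "k * A0 $ i + d = 0" for i by (simp add: vec_eq_iff)
    have "A0 $ i = z0 $ i" for i
    proof -
      have "A0 $ i = - d / k" using h[of i] k0 by (simp add: field_simps) 
      then show ?thesis by (simp add: z0_def)
    qed
    then have "companion (\<lambda>j. a j z0) *v z0 = z0" unfolding A0_def by (simp add: vec_eq_iff)
    then have "z0 = 0" using fix_unique by metis
    then show ?thesis using k0 by (simp add: z0_def vec_eq_iff)
  qed
  have Tk: "T z = k *\<^sub>R z" for z using Tlin d0 by (simp add: vec_eq_iff)
  show ?thesis
  proof (intro exI[of _ k] conjI allI)
    fix z
    show "(f \<circ> g) z = k *\<^sub>R z" using Tk T_def by simp
    have "companion (\<lambda>j. ah j ((f \<circ> g) z)) *v (f \<circ> g) z = (f \<circ> g) (companion (\<lambda>j. a j z) *v z)"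
      using optimal[of 0 z] U_pos by simp
    then show "companion (\<lambda>j. ah j ((f \<circ> g) z)) *v (f \<circ> g) z = k *\<^sub>R (companion (\<lambda>j. a j z) *v z)"
      using Tk T_def by simp
    show "bh ((f \<circ> g) z) = k * b z" using bhk T_def by simp
  qed (rule k0)
qed

end
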